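(* Let $\sigma_1,\sigma_2>0$, $\rho\in\mathbb{R}$, and let $\psi_{11},\psi_{12},\psi_{22}:[0,\infty)\to\mathbb{R}$ be continuous functions, each a correlation function of a stationary isotropic univariate random field (in particular $\psi_{ij}(0)=1$); write $\psi_{21}=\psi_{12}$. Define $$C(r)=\begin{bmatrix}\sigma_1^2\psi_{11}(r)&\rho\sigma_1\sigma_2\psi_{12}(r)\\ \rho\sigma_1\sigma_2\psi_{12}(r)&\sigma_2^2\psi_{22}(r)\end{bmatrix},\qquad r\ge0.$$ (a) Suppose $\psi_{ij}$, $i,j=1,2$, are twice continuously differentiable on $(0,\infty)$ and: (i) $\psi_{ii}''(r)\ge0$ for all $r>0$, $i=1,2$; (ii) $\psi_{ij}(r)\to0$ and $r\psi_{ij}'(r)\to0$ as $r\to\infty$, $i,j=1,2$; (iii) $r\mapsto r\psi_{ij}''(r)$ is integrable on $(0,\infty)$, $i,j=1,2$; (iv) $\rho^2\le\inf_{r>0}\frac{\psi_{11}''(r)\psi_{22}''(r)}{(\psi_{12}''(r))^2}$. Then $C$ is positive definite in $\mathbb{R}$. (b) Suppose $\psi_{ij}$, $i,j=1,2$, are three times continuously differentiable on $(0,\infty)$ and: (i) $\psi_{ii}''(r)-r\psi_{ii}'''(r)\ge0$ for all $r>0$, $i=1,2$; (ii) $\psi_{ij}(r)\to0$, $r\psi_{ij}'(r)\to0$ and $r^2\psi_{ij}''(r)\to0$ as $r\to\infty$, $i,j=1,2$; (iii) $r\mapsto r\psi_{ij}''(r)-r^2\psi_{ij}'''(r)$ is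 integrable on $(0,\infty)$, $i,j=1,2$; (iv) $\rho^2\le\inf_{r>0}\frac{(\psi_{11}''(r)-r\psi_{11}'''(r))(\psi_{22}''(r)-r\psi_{22}'''(r))}{(\psi_{12}''(r)-r\psi_{12}'''(r))^2}$. Then $C$ is positive definite in $\mathbb{R}^3$.
   Context: A $2\times2$ matrix-valued function $C$ on $[0,\infty)$ is called positive definite in $\mathbb{R}^n$ if for every $p\in\mathbb{N}$, all $x_1,\dots,x_p\in\mathbb{R}^n$ and all $a_1,\dots,a_p\in\mathbb{R}^2$ one has $\sum_{i,j=1}^p a_i^T C(\|x_i-x_j\|)a_j\ge0$. In (a)(iv) the infimum is over those $r>0$ with $\psi_{12}''(r)\neq0$, and in (b)(iv) over those $r>0$ with $\psi_{12}''(r)-r\psi_{12}'''(r)\neq0$. *)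

theory Defs
  imports "HOL-Analysis.Analysis"
begin

definition scalar_pd_in :: "'a::real_normed_vector itself \<Rightarrow> (real \<Rightarrow> real) \<Rightarrow> bool" where
  "scalar_pd_in (_::'a itself) \<psi> \<longleftrightarrow>
     (\<forall>(p::nat) (x::nat \<Rightarrow> 'a) (c::nat \<Rightarrow> real).
        (\<Sum>i<p. \<Sum>j<p. c i * \<psi> (norm (x i - x j)) * c j) \<ge> 0)"

definition correlation_fun_in :: "'a::real_normed_vector itself \<Rightarrow> (real \<Rightarrow> real) \<Rightarrow> bool" where
  "correlation_fun_in T \<psi> \<longleftrightarrow> \<psi> 0 = 1 \<and> scalar_pd_in T \<psi>"

definition matrix_pd_in :: "'a::real_normed_vector itself \<Rightarrow> (real \<Rightarrow> real^2^2) \<Rightarrow> bool" where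
  "matrix_pd_in (_::'a itself) C \<longleftrightarrow>
     (\<forall>(p::nat) (x::nat \<Rightarrow> 'a) (a::nat \<Rightarrow> real^2).
        (\<Sum>i<p. \<Sum>j<p. a i \<bullet> (C (norm (x i - x j)) *v a j)) \<ge> 0)"

definition Ck_on :: "nat \<Rightarrow> (real \<Rightarrow> real) \<Rightarrow> real set \<Rightarrow> bool" where
  "Ck_on k f S \<longleftrightarrow>
     (\<forall>m<k. \<forall>x\<in>S. ((deriv ^^ m) f) differentiable (at x)) \<and>
     continuous_on S ((deriv ^^ k) f)"

definition cov_matrix :: "real \<Rightarrow> real \<Rightarrow> real \<Rightarrow> (real \<Rightarrow> real) \<Rightarrow> (real \<Rightarrow> real) \<Rightarrow> (real \<Rightarrow> real)
    \<Rightarrow> real \<Rightarrow> real^2^2" where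
  "cov_matrix \<sigma>1 \<sigma>2 \<rho> \<psi>11 \<psi>12 \<psi>22 r =
     vector [vector [\<sigma>1^2 * \<psi>11 r, \<rho> * \<sigma>1 * \<sigma>2 * \<psi>12 r],
             vector [\<rho> * \<sigma>1 * \<sigma>2 * \<psi>12 r, \<sigma>2^2 * \<psi>22 r]]"

end

theory Submission
  imports Defs
begin

lemma pd_indicator:
  fixes M :: "'b measure" and A :: "nat \<Rightarrow> 'b set" and c :: "nat \<Rightarrow> real"
  assumes "\<And>i. A i \<in> sets M" "\<And>i. emeasure M (A i) < \<infinity>"
  shows "(\<Sum>i<p. \<Sum>j<p. c i * measure M (A i \<inter> A j) * c j) \<ge> 0"
proof -
  have int: "integrable M (indicator (A i) :: 'b \<Rightarrow> real)" for i
    using assms by (intro integrable_real_indicator) auto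
  have int2: "integrable M (\<lambda>z. (c i * c j) * (indicator (A i) z * indicator (A j) z) :: real)" for i j
  proof -
    have "(\<lambda>z. (c i * c j) * (indicator (A i) z * indicator (A j) z) :: real) = (\<lambda>z. (c i * c j) * indicator (A i \<inter> A j) z)"
      by (auto simp: indicator_def fun_eq_iff)
    moreover have "integrable M (indicator (A i \<inter> A j) :: 'b \<Rightarrow> real)"
      using assms by (intro integrable_real_indicator)
        (auto intro: le_less_trans[OF emeasure_mono[of "A i \<inter> A j" "A i"]])
    ultimately show ?thesis by simp
  qed
  have meq: "measure M (A i \<inter> A j) = (LINT z|M. indicator (A i) z * indicator (A j) z)" for i j
  proof -
    have "(\<lambda>z. indicator (A i) z * indicator (A j) z :: real) = indicator (A i \<inter> A j)"
      by (auto simp: indicator_def fun_eq_iff)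
    moreover have "A i \<inter> A j \<inter> space M = A i \<inter> A j"
      using sets.sets_into_space[OF assms(1)[of i]] by auto
    ultimately show ?thesis by simp
  qed
  have "(\<Sum>i<p. \<Sum>j<p. c i * measure M (A i \<inter> A j) * c j)
      = (\<Sum>i<p. \<Sum>j<p. LINT z|M. (c i * c j) * (indicator (A i) z * indicator (A j) z))"
    by (simp add: meq mult_ac)
  also have "\<dots> = (\<Sum>i<p. LINT z|M. (\<Sum>j<p. (c i * c j) * (indicator (A i) z * indicator (A j) z)))"
    by (rule sum.cong[OF refl], rule Bochner_Integration.integral_sum[symmetric]) (blast intro: int2)
  also have "\<dots> = (LINT z|M. (\<Sum>i<p. \<Sum>j<p. (c i * c j) * (indicator (A i) z * indicator (A j) z)))"
    by (rule Bochner_Integration.integral_sum[symmetric]) (intro Bochner_Integration.integrable_sum int2)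
  also have "\<dots> = (LINT z|M. (\<Sum>i<p. c i * indicator (A i) z)^2)"
    by (intro Bochner_Integration.integral_cong refl) (simp only: power2_eq_square sum_product mult_ac)
  also have "\<dots> \<ge> 0" by simp
  finally show ?thesis .
qed

definition k1 :: "real \<Rightarrow> real" where "k1 s = max 0 (1 - s)"

lemma k1_pd:
  fixes x :: "nat \<Rightarrow> real" and c :: "nat \<Rightarrow> real"
  assumes "t > 0"
  shows "(\<Sum>i<p. \<Sum>j<p. c i * k1 (norm (x i - x j) / t) * c j) \<ge> 0"
proof -
  have eq: "k1 (norm (x i - x j) / t) = measure lborel ({x i - t..x i} \<inter> {x j - t..x j}) / t" for i j
  proof -
    have "{x i - t..x i} \<inter> {x j - t..x j} = {max (x i) (x j) - t .. min (x i) (x j)}" by auto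
    hence "measure lborel ({x i - t..x i} \<inter> {x j - t..x j}) = max 0 (t - \<bar>x i - x j\<bar>)"
      by (simp add: measure_def emeasure_lborel_Icc_eq) (auto simp: max_def min_def)
    thus ?thesis using assms by (simp add: k1_def field_simps max_def)
  qed
  have "0 \<le> (\<Sum>i<p. \<Sum>j<p. c i * measure lborel ({x i - t..x i} \<inter> {x j - t..x j}) * c j) / t"
    using assms pd_indicator[of "\<lambda>i. {x i - t..x i}" lborel] by simp
  also have "\<dots> = (\<Sum>i<p. \<Sum>j<p. c i * k1 (norm (x i - x j) / t) * c j)"
    by (simp only: sum_divide_distrib eq times_divide_eq_right times_divide_eq_left)
  finally show ?thesis .
qed

lemma cov_expand:
  "a \<bullet> (cov_matrix q1 q2 \<rho> f g h d *v b) =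
     q1^2 * f d * (a$1*b$1) + \<rho>*q1*q2*g d * (a$1*b$2 + a$2*b$1) + q2^2 * h d * (a$2*b$2)"
  by (simp add: cov_matrix_def inner_vec_def matrix_vector_mult_def sum_2 vector_2 algebra_simps)

lemma quad_aux:
  fixes \<alpha> \<beta> \<gamma> :: real
  assumes "\<alpha> \<ge> 0" "\<beta> \<ge> 0" "\<gamma>^2 \<le> \<alpha> * \<beta>"
  shows "\<alpha> + \<beta> + 2 * \<gamma> \<ge> 0"
proof -
  have e: "(\<alpha> + \<beta>)^2 - (2*\<gamma>)^2 = (\<alpha>-\<beta>)^2 + 4*(\<alpha>*\<beta> - \<gamma>^2)"
    by (simp add: power2_eq_square algebra_simps)
  have "(\<alpha>-\<beta>)^2 + 4*(\<alpha>*\<beta> - \<gamma>^2) \<ge> 0" using assms by simp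
  hence "(2*\<gamma>)^2 \<le> (\<alpha> + \<beta>)^2" using e by linarith
  hence "\<bar>2*\<gamma>\<bar> \<le> \<bar>\<alpha> + \<beta>\<bar>" by (simp add: abs_le_square_iff)
  thus ?thesis using assms by linarith
qed

lemma cs_aux:
  fixes U V W :: real
  assumes "\<And>l m. l^2 * U + 2*l*m*W + m^2 * V \<ge> 0"
  shows "U \<ge> 0" "V \<ge> 0" "W^2 \<le> U * V"
proof -
  show U: "U \<ge> 0" using assms[of 1 0] by simp
  show V: "V \<ge> 0" using assms[of 0 1] by simp
  have 1: "V * (U*V - W^2) \<ge> 0" using assms[of V "-W"] by (simp add: algebra_simps power2_eq_square)
  have 2: "U * (U*V - W^2) \<ge> 0" using assms[of "-W" U] by (simp add: algebra_simps power2_eq_square)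
  show "W^2 \<le> U * V"
  proof (cases "U > 0 \<or> V > 0")
    case True
    thus ?thesis using 1 2 by (metis diff_ge_0_iff_ge zero_le_mult_iff not_le)
  next
    case False
    hence "U = 0" "V = 0" using U V by auto
    moreover have "2*W \<ge> 0" "-2*W \<ge> 0" using assms[of 1 1] assms[of 1 "-1"] \<open>U = 0\<close> \<open>V = 0\<close> by auto
    ultimately show ?thesis by simp
  qed
qed

lemma sym_sum_swap:
  fixes K :: "nat \<Rightarrow> nat \<Rightarrow> real" and u v :: "nat \<Rightarrow> real"
  assumes "\<And>i j. K i j = K j i"
  shows "(\<Sum>i<p. \<Sum>j<p. v i * K i j * u j) = (\<Sum>i<p. \<Sum>j<p. u i * K i j * v j)"
  by (subst sum.swap) (simp add: assms mult_ac)

lemma pd_cs: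
  fixes K :: "nat \<Rightarrow> nat \<Rightarrow> real" and u v :: "nat \<Rightarrow> real" and U V W :: real
  assumes pd: "\<And>c. (\<Sum>i<p. \<Sum>j<p. c i * K i j * c j) \<ge> 0"
    and sym: "\<And>i j. K i j = K j i"
    and U_def: "U = (\<Sum>i<p. \<Sum>j<p. u i * K i j * u j)"
    and V_def: "V = (\<Sum>i<p. \<Sum>j<p. v i * K i j * v j)"
    and W_def: "W = (\<Sum>i<p. \<Sum>j<p. u i * K i j * v j)"
  shows "U \<ge> 0" "V \<ge> 0" "W^2 \<le> U * V"
proof -
  have W': "(\<Sum>i<p. \<Sum>j<p. v i * K i j * u j) = W"
    unfolding W_def by (rule sym_sum_swap[OF sym])
  have "l^2 * U + 2*l*m*W + m^2 * V \<ge> 0" for l m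
  proof -
    have "(\<Sum>i<p. \<Sum>j<p. (l * u i + m * v i) * K i j * (l * u j + m * v j))
       = l^2 * U + l*m*W + l*m*(\<Sum>i<p. \<Sum>j<p. v i * K i j * u j) + m^2 * V"
      unfolding U_def V_def W_def
      by (simp add: algebra_simps sum.distrib sum_distrib_left power2_eq_square)
    also have "\<dots> = l^2 * U + 2*l*m*W + m^2 * V" using W' by simp
    finally show ?thesis using pd[of "\<lambda>i. l * u i + m * v i"] by simp
  qed
  from cs_aux[OF this] show "U \<ge> 0" "V \<ge> 0" "W^2 \<le> U * V" by auto
qed

lemma matrix_pd_generic:
  fixes \<kappa> ha hb hc \<psi>11 \<psi>12 \<psi>22 :: "real \<Rightarrow> real" and T :: "'a::real_normed_vector itself"
    and \<sigma>1 \<sigma>2 \<rho> :: real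
  assumes pd: "\<And>t p (x::nat \<Rightarrow> 'a) c. t > 0 \<Longrightarrow> (\<Sum>i<p. \<Sum>j<p. c i * \<kappa> (norm (x i - x j) / t) * c j) \<ge> 0"
  and rep11: "\<And>r. r \<ge> 0 \<Longrightarrow> \<psi>11 r = (LINT t|lborel. indicator {0<..} t * (\<kappa> (r/t) * ha t))"
  and rep12: "\<And>r. r \<ge> 0 \<Longrightarrow> \<psi>12 r = (LINT t|lborel. indicator {0<..} t * (\<kappa> (r/t) * hb t))"
  and rep22: "\<And>r. r \<ge> 0 \<Longrightarrow> \<psi>22 r = (LINT t|lborel. indicator {0<..} t * (\<kappa> (r/t) * hc t))"
  and int11: "\<And>r. r \<ge> 0 \<Longrightarrow> integrable lborel (\<lambda>t. indicator {0<..} t * (\<kappa> (r/t) * ha t))"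
  and int12: "\<And>r. r \<ge> 0 \<Longrightarrow> integrable lborel (\<lambda>t. indicator {0<..} t * (\<kappa> (r/t) * hb t))"
  and int22: "\<And>r. r \<ge> 0 \<Longrightarrow> integrable lborel (\<lambda>t. indicator {0<..} t * (\<kappa> (r/t) * hc t))"
  and pos11: "\<And>t. t > 0 \<Longrightarrow> ha t \<ge> 0"
  and pos22: "\<And>t. t > 0 \<Longrightarrow> hc t \<ge> 0"
  and cs: "\<And>t. t > 0 \<Longrightarrow> \<rho>^2 * (hb t)^2 \<le> ha t * hc t"
  shows "matrix_pd_in T (cov_matrix \<sigma>1 \<sigma>2 \<rho> \<psi>11 \<psi>12 \<psi>22)"
  unfolding matrix_pd_in_def
proof (intro allI)
  fix p :: nat and x :: "nat \<Rightarrow> 'a" and a :: "nat \<Rightarrow> real^2"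
  define d where "d i j = norm (x i - x j)" for i j
  define u where "u i = a i $ 1" for i
  define v where "v i = a i $ 2" for i
  define H where "H h r t = indicator {0<..} t * (\<kappa> (r/t) * h t)" for h r t
  define G where "G i j t = \<sigma>1^2 * (u i * u j) * H ha (d i j) t
      + \<rho> * \<sigma>1 * \<sigma>2 * (u i * v j + v i * u j) * H hb (d i j) t
      + \<sigma>2^2 * (v i * v j) * H hc (d i j) t" for i j t
  have d0: "d i j \<ge> 0" for i j by (simp add: d_def)
  have intG: "integrable lborel (G i j)" for i j
    unfolding G_def H_def using int11[OF d0] int12[OF d0] int22[OF d0] by auto
  have trm: "a i \<bullet> (cov_matrix \<sigma>1 \<sigma>2 \<rho> \<psi>11 \<psi>12 \<psi>22 (d i j) *v a j) = (LINT t|lborel. G i j t)" for i j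
  proof -
    have "(LINT t|lborel. G i j t) = \<sigma>1^2 * (u i * u j) * (LINT t|lborel. H ha (d i j) t)
        + \<rho> * \<sigma>1 * \<sigma>2 * (u i * v j + v i * u j) * (LINT t|lborel. H hb (d i j) t)
        + \<sigma>2^2 * (v i * v j) * (LINT t|lborel. H hc (d i j) t)"
      unfolding G_def using int11[OF d0] int12[OF d0] int22[OF d0]
      by (simp add: H_def)
    also have "\<dots> = a i \<bullet> (cov_matrix \<sigma>1 \<sigma>2 \<rho> \<psi>11 \<psi>12 \<psi>22 (d i j) *v a j)"
      by (simp add: cov_expand H_def u_def v_def rep11[OF d0] rep12[OF d0] rep22[OF d0] algebra_simps)
    finally show ?thesis by simp
  qed
  have "(\<Sum>i<p. \<Sum>j<p. a i \<bullet> (cov_matrix \<sigma>1 \<sigma>2 \<rho> \<psi>11 \<psi>12 \<psi>22 (norm (x i - x j)) *v a j))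
      = (\<Sum>i<p. \<Sum>j<p. LINT t|lborel. G i j t)"
    using trm by (simp add: d_def)
  also have "\<dots> = (\<Sum>i<p. LINT t|lborel. (\<Sum>j<p. G i j t))"
    by (rule sum.cong[OF refl], rule Bochner_Integration.integral_sum[symmetric]) (blast intro: intG)
  also have "\<dots> = (LINT t|lborel. (\<Sum>i<p. \<Sum>j<p. G i j t))"
    by (rule Bochner_Integration.integral_sum[symmetric]) (intro Bochner_Integration.integrable_sum intG)
  also have "\<dots> \<ge> 0"
  proof (rule integral_nonneg_AE, rule AE_I2)
    fix t :: real
    show "0 \<le> (\<Sum>i<p. \<Sum>j<p. G i j t)"
    proof (cases "t > 0")
      case False
      thus ?thesis by (simp add: G_def H_def)
    next
      case True
      define K where "K i j = \<kappa> (d i j / t)" for i j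
      define U where "U = (\<Sum>i<p. \<Sum>j<p. u i * K i j * u j)"
      define V where "V = (\<Sum>i<p. \<Sum>j<p. v i * K i j * v j)"
      define W where "W = (\<Sum>i<p. \<Sum>j<p. u i * K i j * v j)"
      have symK: "K i j = K j i" for i j by (simp add: K_def d_def norm_minus_commute)
      have pdK: "(\<Sum>i<p. \<Sum>j<p. c i * K i j * c j) \<ge> 0" for c
        unfolding K_def d_def using pd[OF True] by blast
      note cs3 = pd_cs[OF pdK symK U_def V_def W_def]
      have W': "(\<Sum>i<p. \<Sum>j<p. v i * K i j * u j) = W"
        unfolding W_def by (rule sym_sum_swap[OF symK])
      have "(\<Sum>i<p. \<Sum>j<p. G i j t) = \<sigma>1^2 * ha t * U
          + \<rho> * \<sigma>1 * \<sigma>2 * hb t * (W + (\<Sum>i<p. \<Sum>j<p. v i * K i j * u j)) + \<sigma>2^2 * hc t * V"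
        unfolding G_def H_def U_def V_def W_def K_def using True
        by (simp add: algebra_simps sum.distrib sum_distrib_left)
      also have "\<dots> = (\<sigma>1^2 * ha t * U) + (\<sigma>2^2 * hc t * V) + 2 * (\<rho> * \<sigma>1 * \<sigma>2 * hb t * W)"
        using W' by (simp add: algebra_simps)
      also have "\<dots> \<ge> 0"
      proof (rule quad_aux)
        show "0 \<le> \<sigma>1^2 * ha t * U" using pos11[OF True] cs3 by simp
        show "0 \<le> \<sigma>2^2 * hc t * V" using pos22[OF True] cs3 by simp
        have m: "(\<rho>^2 * (hb t)^2) * W^2 \<le> (ha t * hc t) * (U * V)"
          by (rule mult_mono) (use cs[OF True] cs3 pos11[OF True] pos22[OF True] in auto)
        have e1: "(\<rho> * \<sigma>1 * \<sigma>2 * hb t * W)^2 = (\<sigma>1^2*\<sigma>2^2) * ((\<rho>^2 * (hb t)^2) * W^2)"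
          by (simp add: power_mult_distrib)
        have e2: "(\<sigma>1^2 * ha t * U) * (\<sigma>2^2 * hc t * V) = (\<sigma>1^2*\<sigma>2^2) * ((ha t * hc t) * (U * V))"
          by (simp add: mult_ac)
        show "(\<rho> * \<sigma>1 * \<sigma>2 * hb t * W)^2 \<le> (\<sigma>1^2 * ha t * U) * (\<sigma>2^2 * hc t * V)"
          unfolding e1 e2 by (rule mult_left_mono[OF m]) simp
      qed
      finally show ?thesis .
    qed
  qed
  finally show "(\<Sum>i<p. \<Sum>j<p. a i \<bullet> (cov_matrix \<sigma>1 \<sigma>2 \<rho> \<psi>11 \<psi>12 \<psi>22 (norm (x i - x j)) *v a j)) \<ge> 0" .
qed


lemma integrable_kernel:
  fixes \<kappa> h :: "real \<Rightarrow> real"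
  assumes kc: "continuous_on UNIV \<kappa>" and kb: "\<And>s. s \<ge> 0 \<Longrightarrow> \<bar>\<kappa> s\<bar> \<le> 1"
    and hi: "set_integrable lborel {0<..} h" and r: "r \<ge> 0"
  shows "integrable lborel (\<lambda>t. indicator {0<..} t * (\<kappa> (r/t) * h t))"
proof -
  have hi': "integrable lborel (\<lambda>t. indicator {0<..} t * h t)"
    using hi by (simp add: set_integrable_def)
  have m: "(\<lambda>t. \<kappa> (r/t)) \<in> borel_measurable lborel"
    using measurable_compose[OF _ borel_measurable_continuous_onI[OF kc], of "\<lambda>t. r/t" lborel] by simp
  show ?thesis
  proof (rule Bochner_Integration.integrable_bound[OF hi'])
    have "(\<lambda>t. \<kappa> (r/t) * (indicator {0<..} t * h t)) \<in> borel_measurable lborel"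
      by (rule borel_measurable_times[OF m borel_measurable_integrable[OF hi']])
    thus "(\<lambda>t. indicator {0<..} t * (\<kappa> (r/t) * h t)) \<in> borel_measurable lborel"
      by (simp add: mult_ac)
    show "AE t in lborel. norm (indicator {0<..} t * (\<kappa> (r/t) * h t)) \<le> norm (indicator {0<..} t * h t :: real)"
    proof (rule AE_I2)
      fix t :: real
      show "norm (indicator {0<..} t * (\<kappa> (r/t) * h t)) \<le> norm (indicator {0<..} t * h t :: real)"
      proof (cases "t > 0")
        case True
        hence "\<bar>\<kappa> (r/t)\<bar> \<le> 1" using r by (intro kb) simp
        hence "\<bar>\<kappa> (r/t)\<bar> * \<bar>h t\<bar> \<le> 1 * \<bar>h t\<bar>" by (intro mult_right_mono) auto
        thus ?thesis using True by (simp add: abs_mult)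
      qed simp
    qed
  qed
qed

lemma rep_zero:
  fixes \<kappa> h \<psi> :: "real \<Rightarrow> real"
  assumes kc: "continuous_on UNIV \<kappa>" and kb: "\<And>s. s \<ge> 0 \<Longrightarrow> \<bar>\<kappa> s\<bar> \<le> 1"
    and hi: "set_integrable lborel {0<..} h"
    and rep: "\<And>r. r > 0 \<Longrightarrow> \<psi> r = (LINT t|lborel. indicator {0<..} t * (\<kappa> (r/t) * h t))"
    and cont: "continuous_on {0..} \<psi>"
  shows "\<psi> 0 = (LINT t|lborel. indicator {0<..} t * (\<kappa> (0/t) * h t))"
proof -
  define rr where "rr n = 1 / real (Suc n)" for n
  have rr0: "rr \<longlonglongrightarrow> 0" unfolding rr_def by (rule LIMSEQ_Suc[OF lim_const_over_n]) 
  have rrpos: "rr n > 0" for n by (simp add: rr_def)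
  have hi': "integrable lborel (\<lambda>t. indicator {0<..} t * h t)"
    using hi by (simp add: set_integrable_def)
  have l1: "(\<lambda>n. \<psi> (rr n)) \<longlonglongrightarrow> \<psi> 0"
    by (rule continuous_on_tendsto_compose[OF cont rr0]) (auto simp: less_imp_le[OF rrpos])
  have l2: "(\<lambda>n. LINT t|lborel. indicator {0<..} t * (\<kappa> (rr n/t) * h t))
      \<longlonglongrightarrow> (LINT t|lborel. indicator {0<..} t * (\<kappa> (0/t) * h t))"
  proof (rule integral_dominated_convergence[where w = "\<lambda>t. norm (indicator {0<..} t * h t)"])
    show "(\<lambda>t. indicator {0<..} t * (\<kappa> (0/t) * h t)) \<in> borel_measurable lborel"
      using integrable_kernel[OF kc kb hi, of 0] by auto
    show "(\<lambda>t. indicator {0<..} t * (\<kappa> (rr n/t) * h t)) \<in> borel_measurable lborel" for n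
      using integrable_kernel[OF kc kb hi, of "rr n"] rrpos[of n] by auto
    show "integrable lborel (\<lambda>t. norm (indicator {0<..} t * h t))"
      using hi' by auto
    show "AE t in lborel. (\<lambda>n. indicator {0<..} t * (\<kappa> (rr n/t) * h t))
            \<longlonglongrightarrow> indicator {0<..} t * (\<kappa> (0/t) * h t)"
    proof (rule AE_I2)
      fix t :: real
      have "(\<lambda>n. rr n / t) \<longlonglongrightarrow> 0 / t" using tendsto_divide_zero[OF rr0, of t] by simp
      hence "(\<lambda>n. \<kappa> (rr n / t)) \<longlonglongrightarrow> \<kappa> (0 / t)"
        by (rule continuous_on_tendsto_compose[OF kc]) auto
      thus "(\<lambda>n. indicator {0<..} t * (\<kappa> (rr n/t) * h t))
            \<longlonglongrightarrow> indicator {0<..} t * (\<kappa> (0/t) * h t)"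
        by (intro tendsto_intros)
    qed
    show "AE t in lborel. norm (indicator {0<..} t * (\<kappa> (rr n/t) * h t)) \<le> norm (indicator {0<..} t * h t :: real)" for n
    proof (rule AE_I2)
      fix t :: real
      show "norm (indicator {0<..} t * (\<kappa> (rr n/t) * h t)) \<le> norm (indicator {0<..} t * h t :: real)"
      proof (cases "t > 0")
        case True
        hence "\<bar>\<kappa> (rr n/t)\<bar> \<le> 1" using rrpos[of n] by (intro kb) simp
        hence "\<bar>\<kappa> (rr n/t)\<bar> * \<bar>h t\<bar> \<le> 1 * \<bar>h t\<bar>" by (intro mult_right_mono) auto
        thus ?thesis using True by (simp add: abs_mult)
      qed simp
    qed
  qed
  have "(\<lambda>n. \<psi> (rr n)) = (\<lambda>n. LINT t|lborel. indicator {0<..} t * (\<kappa> (rr n/t) * h t))"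
    using rep rrpos by auto
  with l2 have "(\<lambda>n. \<psi> (rr n)) \<longlonglongrightarrow> (LINT t|lborel. indicator {0<..} t * (\<kappa> (0/t) * h t))" by simp
  from LIMSEQ_unique[OF l1 this] show ?thesis .
qed

lemma Ck_on_2D:
  assumes "Ck_on 2 \<psi> {0<..}" "t > 0"
  shows "(\<psi> has_real_derivative deriv \<psi> t) (at t)"
    "(deriv \<psi> has_real_derivative deriv (deriv \<psi>) t) (at t)"
    "isCont (deriv (deriv \<psi>)) t"
proof -
  have d0: "\<psi> differentiable at t" using assms unfolding Ck_on_def
    by (metis funpow_0 greaterThan_iff pos2)
  have d1: "deriv \<psi> differentiable at t" using assms unfolding Ck_on_def
    by (metis One_nat_def funpow_0 funpow_Suc_right comp_def greaterThan_iff lessI numeral_2_eq_2)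
  show "(\<psi> has_real_derivative deriv \<psi> t) (at t)" using d0 DERIV_deriv_iff_real_differentiable by blast
  show "(deriv \<psi> has_real_derivative deriv (deriv \<psi>) t) (at t)" using d1 DERIV_deriv_iff_real_differentiable by blast
  have "continuous_on {0<..} (deriv (deriv \<psi>))" using assms unfolding Ck_on_def
    by (simp add: numeral_2_eq_2)
  thus "isCont (deriv (deriv \<psi>)) t" using assms(2)
    by (meson continuous_on_eq_continuous_at greaterThan_iff open_greaterThan)
qed

lemma rep_a_pos:
  fixes \<psi> :: "real \<Rightarrow> real"
  assumes ck: "Ck_on 2 \<psi> {0<..}" and lim0: "(\<psi> \<longlongrightarrow> 0) at_top"
    and lim1: "((\<lambda>r. r * deriv \<psi> r) \<longlongrightarrow> 0) at_top"
    and hi: "set_integrable lborel {0<..} (\<lambda>r. r * (deriv ^^ 2) \<psi> r)"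
    and r: "r > 0"
  shows "\<psi> r = (LINT t|lborel. indicator {0<..} t * (k1 (r/t) * (t * (deriv ^^ 2) \<psi> t)))"
proof -
  define f where "f t = (t - r) * deriv (deriv \<psi>) t" for t
  define F where "F t = (t - r) * deriv \<psi> t - \<psi> t" for t
  have kc: "continuous_on UNIV k1" unfolding k1_def by (intro continuous_intros)
  have kb: "\<bar>k1 s\<bar> \<le> 1" if "s \<ge> 0" for s using that by (simp add: k1_def)
  have int: "integrable lborel (\<lambda>t. indicator {0<..} t * (k1 (r/t) * (t * (deriv ^^ 2) \<psi> t)))"
    using integrable_kernel[OF kc kb hi, of r] r by simp
  have eq: "indicator {0<..} t * (k1 (r/t) * (t * (deriv ^^ 2) \<psi> t)) = indicator {r<..} t *\<^sub>R f t" for t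
  proof (cases "t > r")
    case True
    hence "t > 0" using r by simp
    hence "(1 - r/t) * t = t - r" by (simp add: field_simps)
    thus ?thesis using True \<open>t > 0\<close> by (simp add: k1_def f_def numeral_2_eq_2 mult.assoc[symmetric])
  next
    case False
    show ?thesis
    proof (cases "t > 0")
      case True
      hence "r / t \<ge> 1" using False by (simp add: field_simps)
      thus ?thesis using False by (simp add: k1_def)
    qed (use False in simp)
  qed
  have si: "set_integrable lborel (einterval (ereal r) \<infinity>) f"
    unfolding einterval_eq_Ici set_integrable_def using int eq by (simp add: fun_eq_iff[symmetric])
  have FTC: "(LBINT t=ereal r..\<infinity>. f t) = 0 - (- \<psi> r)"
  proof (rule interval_integral_FTC_integrable[OF _ _ _ si])
    show "ereal r < \<infinity>" by simp
    fix t assume t: "ereal r < ereal t" "ereal t < \<infinity>"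
    hence tp: "t > 0" using r by simp
    note D = Ck_on_2D[OF ck tp]
    show "(F has_vector_derivative f t) (at t)"
      unfolding F_def f_def has_real_derivative_iff_has_vector_derivative[symmetric]
      by (rule derivative_eq_intros D(1) D(2) | simp)+
    show "isCont f t" unfolding f_def using D(3) by (intro continuous_intros)
  next
    have tr: "((\<lambda>t. (t - r) * deriv \<psi> t - \<psi> t) \<longlongrightarrow> (r - r) * deriv \<psi> r - \<psi> r) (at_right r)"
    proof -
      note D = Ck_on_2D[OF ck r]
      have "isCont (\<lambda>t. (t - r) * deriv \<psi> t - \<psi> t) r"
        using DERIV_isCont[OF D(1)] DERIV_isCont[OF D(2)] by (intro continuous_intros) auto
      thus ?thesis by (simp add: isCont_def filterlim_at_split)
    qed
    thus "((F \<circ> real_of_ereal) \<longlongrightarrow> - \<psi> r) (at_right (ereal r))"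
      unfolding ereal_tendsto_simps F_def by simp
  next
    have d0: "(deriv \<psi> \<longlongrightarrow> 0) at_top"
    proof -
      have "((\<lambda>t. (t * deriv \<psi> t) * (1/t)) \<longlongrightarrow> 0 * 0) at_top"
        by (intro tendsto_mult lim1 tendsto_divide_0[OF tendsto_const] filterlim_at_top_imp_at_infinity filterlim_ident)
      moreover have "eventually (\<lambda>t. (t * deriv \<psi> t) * (1/t) = deriv \<psi> t) at_top"
        using eventually_gt_at_top[of 0] by eventually_elim simp
      ultimately show ?thesis by (simp add: tendsto_cong)
    qed
    have "((\<lambda>t. t * deriv \<psi> t - r * deriv \<psi> t - \<psi> t) \<longlongrightarrow> 0 - r * 0 - 0) at_top"
      by (intro tendsto_intros lim1 d0 lim0)
    thus "((F \<circ> real_of_ereal) \<longlongrightarrow> 0) (at_left \<infinity>)"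
      unfolding ereal_tendsto_simps F_def by (simp add: algebra_simps)
  qed
  have "(LBINT t=ereal r..\<infinity>. f t) = (LINT t|lborel. indicator {r<..} t *\<^sub>R f t)"
    by (simp add: interval_lebesgue_integral_def einterval_eq_Ici set_lebesgue_integral_def)
  also have "\<dots> = (LINT t|lborel. indicator {0<..} t * (k1 (r/t) * (t * (deriv ^^ 2) \<psi> t)))"
    using eq by simp
  finally show ?thesis using FTC by simp
qed

definition k3 :: "real \<Rightarrow> real" where "k3 s = (max 0 (1 - s))^2 * (1 + s/2)"

lemma k3_cont: "continuous_on UNIV k3" unfolding k3_def by (intro continuous_intros) auto

lemma k3_bound: "s \<ge> 0 \<Longrightarrow> \<bar>k3 s\<bar> \<le> 1"
proof -
  assume s: "s \<ge> 0"
  show ?thesis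
  proof (cases "s \<le> 1")
    case True
    have "(1 - s)^2 * (1 + s/2) = 1 - s * (3 - s^2) / 2" by (simp add: power2_eq_square field_simps)
    moreover have "s^2 \<le> 1" using True s by (simp add: power_le_one)
    hence "s * (3 - s^2) \<ge> 0" using s by simp
    moreover have "(1 - s)^2 * (1 + s/2) \<ge> 0" using s by simp
    moreover have "k3 s = (1 - s)^2 * (1 + s/2)" using True by (simp add: k3_def)
    ultimately show ?thesis by (simp add: abs_le_iff)
  qed (simp add: k3_def)
qed

lemma Ck_on_3D:
  assumes "Ck_on 3 \<psi> {0<..}" "t > 0"
  shows "(\<psi> has_real_derivative deriv \<psi> t) (at t)"
    "(deriv \<psi> has_real_derivative deriv (deriv \<psi>) t) (at t)"
    "(deriv (deriv \<psi>) has_real_derivative deriv (deriv (deriv \<psi>)) t) (at t)"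
    "isCont (deriv (deriv (deriv \<psi>))) t"
proof -
  have d: "((deriv ^^ m) \<psi>) differentiable at t" if "m < 3" for m
    using assms that unfolding Ck_on_def by auto
  have d0: "\<psi> differentiable at t" using d[of 0] by simp
  have d1: "deriv \<psi> differentiable at t" using d[of 1] by simp
  have d2: "deriv (deriv \<psi>) differentiable at t" using d[of 2] by (simp add: numeral_2_eq_2)
  show "(\<psi> has_real_derivative deriv \<psi> t) (at t)" using d0 DERIV_deriv_iff_real_differentiable by blast
  show "(deriv \<psi> has_real_derivative deriv (deriv \<psi>) t) (at t)" using d1 DERIV_deriv_iff_real_differentiable by blast
  show "(deriv (deriv \<psi>) has_real_derivative deriv (deriv (deriv \<psi>)) t) (at t)" using d2 DERIV_deriv_iff_real_differentiable by blast
  have "continuous_on {0<..} (deriv (deriv (deriv \<psi>)))" using assms unfolding Ck_on_def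
    by (simp add: numeral_3_eq_3)
  thus "isCont (deriv (deriv (deriv \<psi>))) t" using assms(2)
    by (meson continuous_on_eq_continuous_at greaterThan_iff open_greaterThan)
qed

lemma F_deriv_b:
  fixes \<psi> qq rr :: "real \<Rightarrow> real"
  assumes D1: "(\<psi> has_real_derivative dd t) (at t)" and D2: "(dd has_real_derivative qq t) (at t)"
   and D3: "(qq has_real_derivative rr t) (at t)" and tp: "t > 0"
  shows "((\<lambda>t. (t - r) * dd t - \<psi> t - (t - r)^2 * (2*t + r) * qq t / (6 * t)) has_real_derivative
      (t - r)^2 * (2*t + r) / (6 * t^2) * (qq t - t * rr t)) (at t)"
  using tp
  by (auto intro!: derivative_eq_intros D1 D2 D3 simp: field_simps power2_eq_square)

lemma rep_b_pos:
  fixes \<psi> :: "real \<Rightarrow> real"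
  assumes ck: "Ck_on 3 \<psi> {0<..}" and lim0: "(\<psi> \<longlongrightarrow> 0) at_top"
    and lim1: "((\<lambda>r. r * deriv \<psi> r) \<longlongrightarrow> 0) at_top"
    and lim2: "((\<lambda>r. r^2 * (deriv ^^ 2) \<psi> r) \<longlongrightarrow> 0) at_top"
    and hi: "set_integrable lborel {0<..} (\<lambda>r. (r * (deriv ^^ 2) \<psi> r - r^2 * (deriv ^^ 3) \<psi> r) / 3)"
    and r: "r > 0"
  shows "\<psi> r = (LINT t|lborel. indicator {0<..} t * (k3 (r/t) *
                    ((t * (deriv ^^ 2) \<psi> t - t^2 * (deriv ^^ 3) \<psi> t) / 3)))"
proof -
  define p2 where "p2 = deriv (deriv \<psi>)"
  define p3 where "p3 = deriv (deriv (deriv \<psi>))"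
  have p23: "(deriv ^^ 2) \<psi> = p2" "(deriv ^^ 3) \<psi> = p3"
    by (simp_all add: p2_def p3_def numeral_2_eq_2 numeral_3_eq_3)
  define f where "f t = (t - r)^2 * (2*t + r) / (6 * t^2) * (p2 t - t * p3 t)" for t
  define F where "F t = (t - r) * deriv \<psi> t - \<psi> t - (t - r)^2 * (2*t + r) * p2 t / (6 * t)" for t
  have int: "integrable lborel (\<lambda>t. indicator {0<..} t * (k3 (r/t) * ((t * p2 t - t^2 * p3 t) / 3)))"
    using integrable_kernel[OF k3_cont k3_bound hi, of r] r by (simp add: p23)
  have eq: "indicator {0<..} t * (k3 (r/t) * ((t * p2 t - t^2 * p3 t) / 3)) = indicator {r<..} t *\<^sub>R f t" for t
  proof (cases "t > r")
    case True
    hence tp: "t > 0" using r by simp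
    have "k3 (r/t) = (1 - r/t)^2 * (1 + r/t/2)" using True tp by (simp add: k3_def field_simps)
    moreover have "(1 - r/t)^2 * (1 + r/t/2) * ((t * p2 t - t^2 * p3 t) / 3) = f t"
      using tp unfolding f_def by (simp add: field_simps power2_eq_square)
    ultimately show ?thesis using True tp by simp
  next
    case False
    show ?thesis
    proof (cases "t > 0")
      case True
      hence "r / t \<ge> 1" using False by (simp add: field_simps)
      thus ?thesis using False by (simp add: k3_def)
    qed (use False in simp)
  qed
  have si: "set_integrable lborel (einterval (ereal r) \<infinity>) f"
    unfolding einterval_eq_Ici set_integrable_def using int eq by (simp add: fun_eq_iff[symmetric])
  have FTC: "(LBINT t=ereal r..\<infinity>. f t) = 0 - (- \<psi> r)"
  proof (rule interval_integral_FTC_integrable[OF _ _ _ si])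
    show "ereal r < \<infinity>" by simp
    fix t assume t: "ereal r < ereal t" "ereal t < \<infinity>"
    hence tp: "t > 0" using r by simp
    note D = Ck_on_3D[OF ck tp, folded p2_def p3_def]
    show "(F has_vector_derivative f t) (at t)"
      unfolding F_def f_def has_real_derivative_iff_has_vector_derivative[symmetric]
      by (rule F_deriv_b[where \<psi>=\<psi> and dd="deriv \<psi>" and qq=p2 and rr=p3 and t=t and r=r, OF D(1) D(2) D(3) tp])
    show "isCont f t" unfolding f_def
      by (intro continuous_intros D(4) DERIV_isCont[OF D(3)]) (use tp in auto)
  next
    note D = Ck_on_3D[OF ck r, folded p2_def p3_def]
    have "isCont F r"
      unfolding F_def using r
      by (intro continuous_intros DERIV_isCont[OF D(1)] DERIV_isCont[OF D(2)] DERIV_isCont[OF D(3)]) auto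
    hence "(F \<longlongrightarrow> F r) (at_right r)" by (simp add: isCont_def filterlim_at_split)
    moreover have "F r = - \<psi> r" by (simp add: F_def)
    ultimately show "((F \<circ> real_of_ereal) \<longlongrightarrow> - \<psi> r) (at_right (ereal r))"
      unfolding ereal_tendsto_simps by simp
  next
    have inv: "((\<lambda>t. r / t) \<longlongrightarrow> 0) at_top"
      by (intro tendsto_divide_0[OF tendsto_const] filterlim_at_top_imp_at_infinity filterlim_ident)
    have d0: "(deriv \<psi> \<longlongrightarrow> 0) at_top"
    proof -
      have "((\<lambda>t. (t * deriv \<psi> t) * (1/t)) \<longlongrightarrow> 0 * 0) at_top"
        by (intro tendsto_mult lim1 tendsto_divide_0[OF tendsto_const] filterlim_at_top_imp_at_infinity filterlim_ident)
      moreover have "eventually (\<lambda>t. (t * deriv \<psi> t) * (1/t) = deriv \<psi> t) at_top"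
        using eventually_gt_at_top[of 0] by eventually_elim simp
      ultimately show ?thesis by (simp add: tendsto_cong)
    qed
    have l2: "((\<lambda>t. t^2 * p2 t) \<longlongrightarrow> 0) at_top" using lim2 by (simp add: p23)
    have "((\<lambda>t. t * deriv \<psi> t - r * deriv \<psi> t - \<psi> t - ((1 - r/t)^2 * (2 + r/t) / 6) * (t^2 * p2 t))
        \<longlongrightarrow> 0 - r * 0 - 0 - ((1 - 0)^2 * (2 + 0) / 6) * 0) at_top"
      by (intro tendsto_intros lim1 d0 lim0 inv l2) auto
    moreover have "eventually (\<lambda>t. t * deriv \<psi> t - r * deriv \<psi> t - \<psi> t - ((1 - r/t)^2 * (2 + r/t) / 6) * (t^2 * p2 t) = F t) at_top"
      using eventually_gt_at_top[of 0]
      by eventually_elim (simp add: F_def field_simps power2_eq_square)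
    ultimately have "(F \<longlongrightarrow> 0) at_top" by (simp add: tendsto_cong)
    thus "((F \<circ> real_of_ereal) \<longlongrightarrow> 0) (at_left \<infinity>)"
      unfolding ereal_tendsto_simps by simp
  qed
  have "(LBINT t=ereal r..\<infinity>. f t) = (LINT t|lborel. indicator {r<..} t *\<^sub>R f t)"
    by (simp add: interval_lebesgue_integral_def einterval_eq_Ici set_lebesgue_integral_def)
  also have "\<dots> = (LINT t|lborel. indicator {0<..} t * (k3 (r/t) * ((t * p2 t - t^2 * p3 t) / 3)))"
    using eq by simp
  finally show ?thesis using FTC by (simp add: p23)
qed

lemma poly_int1:
  fixes R a b :: real assumes "a \<le> b"
  shows "((\<lambda>y. R^2 - y^2) has_integral ((R^2 * b - b^3/3) - (R^2 * a - a^3/3))) {a..b}"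
proof -
  have "((\<lambda>y. R^2 - y^2) has_integral ((\<lambda>y. R^2 * y - y^3/3) b - (\<lambda>y. R^2 * y - y^3/3) a)) {a..b}"
    by (rule fundamental_theorem_of_calculus[OF assms])
       (auto intro!: derivative_eq_intros simp: power2_eq_square has_real_derivative_iff_has_vector_derivative[symmetric])
  thus ?thesis by simp
qed

lemma poly_int2:
  fixes R a b d :: real assumes "a \<le> b"
  shows "((\<lambda>y. R^2 - (y - d)^2) has_integral ((R^2 * b - (b-d)^3/3) - (R^2 * a - (a-d)^3/3))) {a..b}"
proof -
  have "((\<lambda>y. R^2 - (y-d)^2) has_integral ((\<lambda>y. R^2 * y - (y-d)^3/3) b - (\<lambda>y. R^2 * y - (y-d)^3/3) a)) {a..b}"
    by (rule fundamental_theorem_of_calculus[OF assms])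
       (auto intro!: derivative_eq_intros simp: power2_eq_square has_real_derivative_iff_has_vector_derivative[symmetric])
  thus ?thesis by simp
qed

lemma lens_1d:
  fixes R d :: real
  assumes R: "R > 0" and d: "0 \<le> d" "d \<le> 2*R"
  shows "(\<integral>\<^sup>+ y. ennreal (max 0 (min (R^2 - y^2) (R^2 - (y-d)^2))) \<partial>lborel)
          = ennreal (4*R^3/3 - R^2*d + d^3/12)"
proof -
  have a1: "d/2 \<le> R" and a2: "d - R \<le> d/2" using d R by auto
  have "AE y in lborel. y \<notin> {d/2}" by (intro AE_not_in countable_imp_null_set_lborel) auto
  hence "(\<integral>\<^sup>+ y. ennreal (max 0 (min (R^2 - y^2) (R^2 - (y-d)^2))) \<partial>lborel)
       = (\<integral>\<^sup>+ y. ennreal (R^2 - y^2) * indicator {d/2..R} y + ennreal (R^2 - (y-d)^2) * indicator {d-R..d/2} y \<partial>lborel)"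
  proof (intro nn_integral_cong_AE, eventually_elim)
    case (elim y)
    show ?case
    proof (cases "y > d/2")
      case True
      have "(y - d)^2 \<le> y^2" using True d by (simp add: power2_eq_square algebra_simps) (smt (verit) mult_left_mono)
      hence m: "min (R^2 - y^2) (R^2 - (y-d)^2) = R^2 - y^2" by simp
      show ?thesis
      proof (cases "y \<le> R")
        case True
        with \<open>y > d/2\<close> d show ?thesis by (simp add: m indicator_def)
      next
        case False
        hence "R^2 - y^2 < 0" using R by (simp add: power_strict_mono)
        with False \<open>y > d/2\<close> show ?thesis by (simp add: m indicator_def)
      qed
    next
      case False
      hence "y < d/2" using elim by auto
      have "y^2 \<le> (y - d)^2" using \<open>y < d/2\<close> d by (simp add: power2_eq_square algebra_simps) (smt (verit) mult_left_mono)
      hence m: "min (R^2 - y^2) (R^2 - (y-d)^2) = R^2 - (y-d)^2" by simp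
      show ?thesis
      proof (cases "d - R \<le> y")
        case True
        have "(d - y)^2 \<le> R^2" using True \<open>y < d/2\<close> d by (intro power_mono) auto
        hence "(y - d)^2 \<le> R^2" by (simp add: power2_commute)
        with True \<open>y < d/2\<close> show ?thesis by (simp add: m indicator_def)
      next
        case False
        hence "R < d - y" by simp
        hence "R^2 < (d - y)^2" using R by (simp add: power_strict_mono)
        hence "R^2 - (y-d)^2 < 0" by (simp add: power2_commute)
        with False \<open>y < d/2\<close> show ?thesis by (simp add: m indicator_def)
      qed
    qed
  qed
  also have "\<dots> = (\<integral>\<^sup>+ y. ennreal (R^2 - y^2) * indicator {d/2..R} y \<partial>lborel)
                 + (\<integral>\<^sup>+ y. ennreal (R^2 - (y-d)^2) * indicator {d-R..d/2} y \<partial>lborel)"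
    by (rule nn_integral_add) auto
  also have "(\<integral>\<^sup>+ y. ennreal (R^2 - y^2) * indicator {d/2..R} y \<partial>lborel)
      = ennreal ((R^2 * R - R^3/3) - (R^2 * (d/2) - (d/2)^3/3))"
  proof (rule nn_integral_has_integral_lebesgue'[OF _ poly_int1[OF a1]])
    fix y assume "y \<in> {d/2..R}"
    hence "\<bar>y\<bar> \<le> R" using d by auto
    hence "y^2 \<le> R^2" by (metis abs_le_square_iff abs_of_pos R)
    thus "0 \<le> R^2 - y^2" by simp
  qed
  also have "(\<integral>\<^sup>+ y. ennreal (R^2 - (y-d)^2) * indicator {d-R..d/2} y \<partial>lborel)
      = ennreal ((R^2 * (d/2) - (d/2-d)^3/3) - (R^2 * (d-R) - (d-R-d)^3/3))"
  proof (rule nn_integral_has_integral_lebesgue'[OF _ poly_int2[OF a2]])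
    fix y assume "y \<in> {d-R..d/2}"
    hence "\<bar>y - d\<bar> \<le> R" using d by auto
    hence "(y-d)^2 \<le> R^2" by (metis abs_le_square_iff abs_of_pos R)
    thus "0 \<le> R^2 - (y-d)^2" by simp
  qed
  also have "ennreal ((R^2 * R - R^3/3) - (R^2 * (d/2) - (d/2)^3/3))
           + ennreal ((R^2 * (d/2) - (d/2-d)^3/3) - (R^2 * (d-R) - (d-R-d)^3/3))
           = ennreal (4*R^3/3 - R^2*d + d^3/12)"
  proof -
    have p: "(R^2 * R - R^3/3) - (R^2 * (d/2) - (d/2)^3/3) \<ge> 0"
    proof -
      have eq: "(R^2 * R - R^3/3) - (R^2 * (d/2) - (d/2)^3/3) = (R - d/2)^2 * (2*R + d/2) / 3"
        by (simp add: power2_eq_square power3_eq_cube field_simps)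
      have "(R - d/2)^2 * (2*R + d/2) / 3 \<ge> 0" using a1 d R by simp
      thus ?thesis using eq by linarith
    qed
    have e: "(R^2 * (d/2) - (d/2-d)^3/3) - (R^2 * (d-R) - (d-R-d)^3/3) = (R^2 * R - R^3/3) - (R^2 * (d/2) - (d/2)^3/3)"
      by (simp add: power3_eq_cube power2_eq_square field_simps)
    show ?thesis unfolding e using p
      by (subst ennreal_plus[symmetric]) (auto simp: power3_eq_cube power2_eq_square field_simps)
  qed
  finally show ?thesis .
qed

lemma unit_ball_vol_2: "unit_ball_vol 2 = pi"
  using unit_ball_vol_even[of 1] by simp

lemma lens_PiM:
  fixes A :: "'i set" and e :: 'i
  assumes A: "finite A" "e \<notin> A" "card A = 2" and R: "R > 0" and d: "0 \<le> d" "d \<le> 2*R"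
  shows "emeasure (Pi\<^sub>M (insert e A) (\<lambda>_. lborel))
     ({f. (\<Sum>i\<in>insert e A. (f i)^2) \<le> R^2 \<and> (\<Sum>i\<in>insert e A. (f i - (if i = e then d else 0))^2) \<le> R^2}
       \<inter> space (Pi\<^sub>M (insert e A) (\<lambda>_. lborel)))
     = ennreal (pi * (4*R^3/3 - R^2*d + d^3/12))"
proof -
  interpret product_sigma_finite "\<lambda>_. lborel :: real measure" by standard
  define m where "m y = min (R^2 - y^2) (R^2 - (y-d)^2)" for y
  let ?S = "{f. (\<Sum>i\<in>insert e A. (f i)^2) \<le> R^2 \<and> (\<Sum>i\<in>insert e A. (f i - (if i = e then d else 0))^2) \<le> R^2}
       \<inter> space (Pi\<^sub>M (insert e A) (\<lambda>_. lborel))"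
  have "emeasure (Pi\<^sub>M (insert e A) (\<lambda>_. lborel)) ?S = nn_integral (Pi\<^sub>M (insert e A) (\<lambda>_. lborel)) (indicator ?S)"
    by (subst nn_integral_indicator) auto
  also have "\<dots> = (\<integral>\<^sup>+ y. \<integral>\<^sup>+ g. indicator ?S (g(e := y)) \<partial>Pi\<^sub>M A (\<lambda>_. lborel) \<partial>lborel)"
    using A by (subst product_nn_integral_insert_rev) auto
  also have "\<dots> = (\<integral>\<^sup>+ y. \<integral>\<^sup>+ g. indicator ({g. (\<Sum>i\<in>A. (g i)^2) \<le> m y} \<inter> space (Pi\<^sub>M A (\<lambda>_. lborel))) g
                   \<partial>Pi\<^sub>M A (\<lambda>_. lborel) \<partial>lborel)"
  proof (intro nn_integral_cong)
    fix y :: real and g :: "'i \<Rightarrow> real" assume g: "g \<in> space (Pi\<^sub>M A (\<lambda>_. lborel))"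
    have s1: "(\<Sum>i\<in>insert e A. (if i = e then y else g i)^2) = y^2 + (\<Sum>i\<in>A. (g i)^2)"
      using A by (simp add: sum.insert) (intro sum.cong, auto)
    have s2: "(\<Sum>i\<in>insert e A. ((if i = e then y else g i) - (if i = e then d else 0))^2) = (y-d)^2 + (\<Sum>i\<in>A. (g i)^2)"
      using A by (simp add: sum.insert) (intro sum.cong, auto)
    have sp: "g(e:=y) \<in> space (Pi\<^sub>M (insert e A) (\<lambda>_. lborel))"
      using g A by (auto simp: space_PiM PiE_def extensional_def)
    show "indicator ?S (g(e := y)) = indicator ({g. (\<Sum>i\<in>A. (g i)^2) \<le> m y} \<inter> space (Pi\<^sub>M A (\<lambda>_. lborel))) g"
      using g sp unfolding indicator_def by (auto simp: s1 s2 m_def)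
  qed
  also have "\<dots> = (\<integral>\<^sup>+ y. emeasure (Pi\<^sub>M A (\<lambda>_. lborel)) ({g. (\<Sum>i\<in>A. (g i)^2) \<le> m y} \<inter> space (Pi\<^sub>M A (\<lambda>_. lborel))) \<partial>lborel)"
    by (intro nn_integral_cong, subst nn_integral_indicator) auto
  also have "\<dots> = (\<integral>\<^sup>+ y. ennreal (pi * max 0 (m y)) \<partial>lborel)"
  proof (intro nn_integral_cong_AE)
    have "AE y in lborel. y \<notin> {R, -R, d+R, d-R}"
      by (intro AE_not_in countable_imp_null_set_lborel) auto
    thus "AE y in lborel. emeasure (Pi\<^sub>M A (\<lambda>_. lborel)) ({g. (\<Sum>i\<in>A. (g i)^2) \<le> m y} \<inter> space (Pi\<^sub>M A (\<lambda>_. lborel)))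
             = ennreal (pi * max 0 (m y))"
    proof eventually_elim
      case (elim y)
      have "m y \<noteq> 0"
      proof
        assume "m y = 0"
        hence "R^2 = y^2 \<or> R^2 = (y-d)^2" unfolding m_def by (auto simp: min_def split: if_splits)
        hence "R = \<bar>y\<bar> \<or> R = \<bar>y - d\<bar>" using R
          by (metis abs_of_pos power2_eq_iff_nonneg abs_ge_zero less_imp_le real_sqrt_abs real_sqrt_unique)
        thus False using elim by (auto simp: abs_if split: if_splits)
      qed
      show ?case
      proof (cases "m y > 0")
        case True
        have "{g. (\<Sum>i\<in>A. (g i)^2) \<le> m y} = {g. sqrt (\<Sum>i\<in>A. (g i)^2) \<le> sqrt (m y)}"
          by (auto simp: real_sqrt_le_iff)
        moreover have "emeasure (Pi\<^sub>M A (\<lambda>_. lborel)) ({g. sqrt (\<Sum>i\<in>A. (g i)^2) \<le> sqrt (m y)} \<inter> space (Pi\<^sub>M A (\<lambda>_. lborel)))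
            = ennreal (unit_ball_vol (real (card A)) * sqrt (m y) ^ card A)"
          using True A(1) by (intro emeasure_cball_aux) auto
        ultimately show ?thesis using True A(3) by (simp add: unit_ball_vol_2)
      next
        case False
        hence "m y < 0" using \<open>m y \<noteq> 0\<close> by simp
        hence "{g. (\<Sum>i\<in>A. (g i)^2) \<le> m y} = {}"
          by (auto intro: not_le_imp_less[THEN less_le_trans] sum_nonneg) (smt (verit) sum_nonneg zero_le_power2)
        thus ?thesis using \<open>m y < 0\<close> by simp
      qed
    qed
  qed
  also have "\<dots> = ennreal pi * (\<integral>\<^sup>+ y. ennreal (max 0 (m y)) \<partial>lborel)"
    by (subst nn_integral_cmult[symmetric]) (auto simp: ennreal_mult m_def)
  also have "(\<integral>\<^sup>+ y. ennreal (max 0 (m y)) \<partial>lborel) = ennreal (4*R^3/3 - R^2*d + d^3/12)"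
    unfolding m_def by (rule lens_1d[OF R d])
  also have "ennreal pi * ennreal (4*R^3/3 - R^2*d + d^3/12) = ennreal (pi * (4*R^3/3 - R^2*d + d^3/12))"
    by (rule ennreal_mult'[symmetric]) simp
  finally show ?thesis .
qed

lemma lens_euclid:
  fixes e :: "'a::euclidean_space"
  assumes e: "e \<in> Basis" and dim: "DIM('a) = 3" and R: "R > 0" and d: "0 \<le> d" "d \<le> 2*R"
  shows "emeasure lborel (cball 0 R \<inter> cball (d *\<^sub>R e) R) = ennreal (pi * (4*R^3/3 - R^2*d + d^3/12))"
proof -
  define A where "A = Basis - {e}"
  have BA: "Basis = insert e A" using e by (auto simp: A_def)
  have A: "finite A" "e \<notin> A" "card A = 2" using e dim by (auto simp: A_def card_Diff_singleton)
  have inner_repr: "(\<Sum>b\<in>Basis. f b *\<^sub>R b) \<bullet> i = f i" if "i \<in> Basis" for f :: "'a \<Rightarrow> real" and i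
    using that by (simp add: inner_sum_left inner_Basis if_distrib sum.delta cong: if_cong)
  have ce: "(d *\<^sub>R e) \<bullet> i = (if i = e then d else 0)" if "i \<in> Basis" for i
    using that e by (auto simp: inner_Basis)
  have eqb: "(lborel :: 'a measure) = distr (Pi\<^sub>M Basis (\<lambda>_. lborel)) borel (\<lambda>f. \<Sum>b\<in>Basis. f b *\<^sub>R b)"
    by (rule lborel_eq)
  have "emeasure lborel (cball 0 R \<inter> cball (d *\<^sub>R e) R) =
     emeasure (distr (Pi\<^sub>M Basis (\<lambda>_. lborel)) borel (\<lambda>f. \<Sum>b\<in>Basis. f b *\<^sub>R b)) (cball 0 R \<inter> cball (d *\<^sub>R e) R)"
    by (simp only: eqb[symmetric])
  also have "\<dots> = emeasure (Pi\<^sub>M Basis (\<lambda>_. lborel)) ((\<lambda>f. \<Sum>b\<in>Basis. f b *\<^sub>R b) -` (cball 0 R \<inter> cball (d *\<^sub>R e) R)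
        \<inter> space (Pi\<^sub>M Basis (\<lambda>_. lborel)))"
    by (rule emeasure_distr) auto
  also have "(\<lambda>f. \<Sum>b\<in>Basis. f b *\<^sub>R b) -` (cball 0 R \<inter> cball (d *\<^sub>R e) R) =
      {f. (\<Sum>i\<in>Basis. (f i)^2) \<le> R^2 \<and> (\<Sum>i\<in>Basis. (f i - (if i = e then d else 0))^2) \<le> R^2}"
  proof -
    have d1: "dist 0 (\<Sum>b\<in>Basis. f b *\<^sub>R b) = sqrt (\<Sum>i\<in>Basis. (f i)^2)" for f :: "'a \<Rightarrow> real"
      unfolding euclidean_dist_l2[of 0] L2_set_def
      by (intro arg_cong[where f = sqrt] sum.cong refl) (simp add: inner_repr dist_real_def power2_abs)
    have d2: "dist (d *\<^sub>R e) (\<Sum>b\<in>Basis. f b *\<^sub>R b) = sqrt (\<Sum>i\<in>Basis. (f i - (if i = e then d else 0))^2)" for f :: "'a \<Rightarrow> real"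
      unfolding euclidean_dist_l2[of "d *\<^sub>R e"] L2_set_def
      by (intro arg_cong[where f = sqrt] sum.cong refl) (use e in \<open>auto simp: inner_repr inner_Basis dist_real_def power2_abs power2_commute\<close>)
    have d1n: "norm (\<Sum>b\<in>Basis. f b *\<^sub>R b) = sqrt (\<Sum>i\<in>Basis. (f i)^2)" for f :: "'a \<Rightarrow> real"
      using d1[of f] by simp
    show ?thesis
      using R by (auto simp: d1n d2 real_sqrt_le_iff' sum_nonneg)
  qed
  also have "emeasure (Pi\<^sub>M Basis (\<lambda>_. lborel))
      ({f. (\<Sum>i\<in>Basis. (f i)^2) \<le> R^2 \<and> (\<Sum>i\<in>Basis. (f i - (if i = e then d else 0))^2) \<le> R^2} \<inter> space (Pi\<^sub>M Basis (\<lambda>_. lborel)))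
      = ennreal (pi * (4*R^3/3 - R^2*d + d^3/12))"
    unfolding BA by (rule lens_PiM[OF A R d])
  finally show ?thesis .
qed

lemma lens_measure:
  fixes a b :: "real^3" assumes R: "R > 0"
  shows "measure lebesgue (cball a R \<inter> cball b R) = (4*pi/3) * R^3 * k3 (dist a b / (2*R))"
proof (cases "dist a b > 2*R")
  case True
  have "cball a R \<inter> cball b R = {}"
  proof (rule ccontr)
    assume "cball a R \<inter> cball b R \<noteq> {}"
    then obtain z where "dist a z \<le> R" "dist b z \<le> R" by auto
    hence "dist a b \<le> 2*R" using dist_triangle3[of a b z] by (simp add: dist_commute)
    thus False using True by simp
  qed
  moreover have "k3 (dist a b / (2*R)) = 0"
    using True R by (simp add: k3_def field_simps)
  ultimately show ?thesis by simp
next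
  case False
  define d where "d = dist a b"
  have d: "0 \<le> d" "d \<le> 2*R" using False by (auto simp: d_def)
  define e :: "real^3" where "e = axis 1 1"
  have e: "e \<in> Basis" by (simp add: e_def)
  have ne: "norm e = 1" by (simp add: e_def)
  define v where "v = b - a"
  have nv: "norm v = norm (d *\<^sub>R e)" using d ne by (simp add: v_def d_def dist_norm norm_minus_commute)
  obtain f where f: "orthogonal_transformation f" "f v = d *\<^sub>R e"
    using orthogonal_transformation_exists[OF nv] by blast
  have tr: "(\<lambda>z. z - a) ` (cball a R \<inter> cball b R) = cball 0 R \<inter> cball v R"
  proof (intro equalityI subsetI)
    fix z assume "z \<in> (\<lambda>z. z - a) ` (cball a R \<inter> cball b R)"
    then obtain w where "w \<in> cball a R" "w \<in> cball b R" "z = w - a" by auto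
    thus "z \<in> cball 0 R \<inter> cball v R" by (auto simp: v_def dist_norm algebra_simps)
  next
    fix z assume "z \<in> cball 0 R \<inter> cball v R"
    hence "z + a \<in> cball a R \<inter> cball b R" by (auto simp: v_def dist_norm algebra_simps)
    thus "z \<in> (\<lambda>z. z - a) ` (cball a R \<inter> cball b R)" by (rule rev_image_eqI) simp
  qed
  have rot: "f ` (cball 0 R \<inter> cball v R) = cball 0 R \<inter> cball (d *\<^sub>R e) R"
  proof -
    have "f ` (cball 0 R \<inter> cball v R) = f ` cball 0 R \<inter> f ` cball v R"
      using orthogonal_transformation_inj[OF f(1)] by (simp add: image_Int)
    also have "\<dots> = cball (f 0) R \<inter> cball (f v) R"
      using image_orthogonal_transformation_cball[OF f(1)] by simp
    also have "f 0 = 0" using orthogonal_transformation_linear[OF f(1)] by (simp add: linear_0)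
    finally show ?thesis using f(2) by simp
  qed
  have cm: "cball 0 R \<inter> cball v R \<in> lmeasurable"
    by (intro lmeasurable_compact compact_Int_closed) auto
  have "measure lebesgue (cball a R \<inter> cball b R) = measure lebesgue (cball 0 R \<inter> cball v R)"
    using measure_translation_subtract[of a "cball a R \<inter> cball b R"] tr by simp
  also have "\<dots> = measure lebesgue (f ` (cball 0 R \<inter> cball v R))"
    by (rule measure_orthogonal_image[OF f(1) cm, symmetric])
  also have "\<dots> = measure lborel (cball 0 R \<inter> cball (d *\<^sub>R e) R)"
    unfolding rot by (rule measure_completion) auto
  also have "\<dots> = pi * (4*R^3/3 - R^2*d + d^3/12)"
  proof -
    have p: "pi * (4*R^3/3 - R^2*d + d^3/12) \<ge> 0"
    proof -
      have "4*R^3/3 - R^2*d + d^3/12 = (2*R - d)^2 * (4*R + d) / 12"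
        by (simp add: power2_eq_square power3_eq_cube field_simps)
      moreover have "(2*R - d)^2 * (4*R + d) / 12 \<ge> 0" using d R by simp
      ultimately show ?thesis by simp
    qed
    show ?thesis unfolding measure_def
      using lens_euclid[OF e _ R d] p by simp
  qed
  also have "\<dots> = (4*pi/3) * R^3 * k3 (dist a b / (2*R))"
  proof -
    have "1 - d / (2*R) \<ge> 0" using d R by (simp add: field_simps)
    hence "k3 (d / (2*R)) = (1 - d/(2*R))^2 * (1 + d/(2*R)/2)" by (simp add: k3_def)
    also have "\<dots> = (2*R - d)^2 * (4*R + d) / (16 * R^3)"
      using R by (simp add: power2_eq_square power3_eq_cube field_simps)
    finally have k: "k3 (dist a b / (2*R)) = (2*R - d)^2 * (4*R + d) / (16 * R^3)" by (simp add: d_def)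
    show ?thesis unfolding k using R
      by (simp add: power2_eq_square power3_eq_cube field_simps)
  qed
  finally show ?thesis .
qed

lemma k3_pd:
  fixes x :: "nat \<Rightarrow> real^3"
  assumes t: "t > 0"
  shows "(\<Sum>i<p. \<Sum>j<p. c i * k3 (norm (x i - x j) / t) * c j) \<ge> 0"
proof -
  define R where "R = t / 2"
  have R: "R > 0" using t by (simp add: R_def)
  define K where "K = (4*pi/3) * R^3"
  have K: "K > 0" using R by (simp add: K_def)
  have eq: "k3 (norm (x i - x j) / t) = measure lebesgue (cball (x i) R \<inter> cball (x j) R) / K" for i j
    using lens_measure[OF R, of "x i" "x j"] K t by (simp add: K_def R_def dist_norm)
  have "0 \<le> (\<Sum>i<p. \<Sum>j<p. c i * measure lebesgue (cball (x i) R \<inter> cball (x j) R) * c j) / K"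
  proof -
    have "0 \<le> (\<Sum>i<p. \<Sum>j<p. c i * measure lebesgue (cball (x i) R \<inter> cball (x j) R) * c j)"
    proof (rule pd_indicator)
      fix i
      show "cball (x i) R \<in> sets lebesgue" by (simp add: lmeasurable_cball fmeasurableD)
      show "emeasure lebesgue (cball (x i) R) < \<infinity>" using R by (simp add: emeasure_cball)
    qed
    thus ?thesis using K by simp
  qed
  also have "\<dots> = (\<Sum>i<p. \<Sum>j<p. c i * k3 (norm (x i - x j) / t) * c j)"
    by (simp only: sum_divide_distrib eq times_divide_eq_right times_divide_eq_left)
  finally show ?thesis .
qed

lemma INF_ereal_le:
  assumes "ereal a \<le> (INF r\<in>S. ereal (g r))" "r \<in> S"
  shows "a \<le> g r"
proof -
  have "(INF r\<in>S. ereal (g r)) \<le> ereal (g r)" using assms(2) by (rule INF_lower)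
  with assms(1) have "ereal a \<le> ereal (g r)" by (rule order_trans)
  thus ?thesis by simp
qed

lemma cs_from_ratio:
  fixes a b c \<rho> :: real
  assumes "a \<ge> 0" "b \<ge> 0" "c \<noteq> 0 \<Longrightarrow> \<rho>^2 \<le> a * b / c^2"
  shows "\<rho>^2 * c^2 \<le> a * b"
proof (cases "c = 0")
  case True thus ?thesis using assms by simp
next
  case False
  hence "c^2 > 0" by simp
  thus ?thesis using assms(3)[OF False] by (simp add: pos_le_divide_eq)
qed

lemma part_a:
  fixes \<sigma>1 \<sigma>2 \<rho> :: real and \<psi>11 \<psi>12 \<psi>22 :: "real \<Rightarrow> real"
  assumes cont: "\<forall>\<psi>\<in>{\<psi>11, \<psi>12, \<psi>22}. continuous_on {0..} \<psi>"
  and H: "(\<forall>\<psi>\<in>{\<psi>11, \<psi>12, \<psi>22}. correlation_fun_in TYPE(real) \<psi>) \<and>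
     (\<forall>\<psi>\<in>{\<psi>11, \<psi>12, \<psi>22}. Ck_on 2 \<psi> {0<..}) \<and>
     (\<forall>\<psi>\<in>{\<psi>11, \<psi>22}. \<forall>r>0. (deriv ^^ 2) \<psi> r \<ge> 0) \<and>
     (\<forall>\<psi>\<in>{\<psi>11, \<psi>12, \<psi>22}.
        (\<psi> \<longlongrightarrow> 0) at_top \<and> ((\<lambda>r. r * deriv \<psi> r) \<longlongrightarrow> 0) at_top) \<and>
     (\<forall>\<psi>\<in>{\<psi>11, \<psi>12, \<psi>22}.
        set_integrable lborel {0<..} (\<lambda>r. r * (deriv ^^ 2) \<psi> r)) \<and>
     ereal (\<rho>^2) \<le> (INF r\<in>{r. r > 0 \<and> (deriv ^^ 2) \<psi>12 r \<noteq> 0}.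
        ereal ((deriv ^^ 2) \<psi>11 r * (deriv ^^ 2) \<psi>22 r / ((deriv ^^ 2) \<psi>12 r)^2))"
  shows "matrix_pd_in TYPE(real) (cov_matrix \<sigma>1 \<sigma>2 \<rho> \<psi>11 \<psi>12 \<psi>22)"
proof -
  have kc: "continuous_on UNIV k1" unfolding k1_def by (intro continuous_intros)
  have kb: "\<And>s. s \<ge> 0 \<Longrightarrow> \<bar>k1 s\<bar> \<le> 1" by (simp add: k1_def)
  have rep: "\<psi> r = (LINT t|lborel. indicator {0<..} t * (k1 (r/t) * (t * (deriv ^^ 2) \<psi> t)))"
    if "\<psi> \<in> {\<psi>11, \<psi>12, \<psi>22}" "r \<ge> 0" for \<psi> r
  proof -
    have ck: "Ck_on 2 \<psi> {0<..}" and l0: "(\<psi> \<longlongrightarrow> 0) at_top"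
      and l1: "((\<lambda>r. r * deriv \<psi> r) \<longlongrightarrow> 0) at_top"
      and hi: "set_integrable lborel {0<..} (\<lambda>r. r * (deriv ^^ 2) \<psi> r)"
      and c: "continuous_on {0..} \<psi>"
      using H cont that(1) by auto
    note rp = rep_a_pos[OF ck l0 l1 hi]
    show ?thesis
    proof (cases "r > 0")
      case True thus ?thesis by (rule rp)
    next
      case False
      hence "r = 0" using that(2) by simp
      thus ?thesis using rep_zero[OF kc kb hi rp c] by simp
    qed
  qed
  have int: "integrable lborel (\<lambda>t. indicator {0<..} t * (k1 (r/t) * (t * (deriv ^^ 2) \<psi> t)))"
    if "\<psi> \<in> {\<psi>11, \<psi>12, \<psi>22}" "r \<ge> 0" for \<psi> r
    using integrable_kernel[OF kc kb _ that(2)] H that(1) by auto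
  show ?thesis
  proof (rule matrix_pd_generic[where \<kappa> = k1 and ha = "\<lambda>t. t * (deriv ^^ 2) \<psi>11 t"
        and hb = "\<lambda>t. t * (deriv ^^ 2) \<psi>12 t" and hc = "\<lambda>t. t * (deriv ^^ 2) \<psi>22 t"])
    show "\<And>t p (x::nat \<Rightarrow> real) c. t > 0 \<Longrightarrow> (\<Sum>i<p. \<Sum>j<p. c i * k1 (norm (x i - x j) / t) * c j) \<ge> 0"
      by (rule k1_pd)
  next
    fix t :: real assume t: "t > 0"
    have p11: "(deriv ^^ 2) \<psi>11 t \<ge> 0" and p22: "(deriv ^^ 2) \<psi>22 t \<ge> 0" using H t by auto
    show "t * (deriv ^^ 2) \<psi>11 t \<ge> 0" "t * (deriv ^^ 2) \<psi>22 t \<ge> 0" using p11 p22 t by auto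
    have "\<rho>^2 * ((deriv ^^ 2) \<psi>12 t)^2 \<le> (deriv ^^ 2) \<psi>11 t * (deriv ^^ 2) \<psi>22 t"
    proof (rule cs_from_ratio[OF p11 p22])
      assume "(deriv ^^ 2) \<psi>12 t \<noteq> 0"
      thus "\<rho>^2 \<le> (deriv ^^ 2) \<psi>11 t * (deriv ^^ 2) \<psi>22 t / ((deriv ^^ 2) \<psi>12 t)^2"
        using H t by (intro INF_ereal_le[where S = "{r. r > 0 \<and> (deriv ^^ 2) \<psi>12 r \<noteq> 0}"]) auto
    qed
    hence "t^2 * (\<rho>^2 * ((deriv ^^ 2) \<psi>12 t)^2) \<le> t^2 * ((deriv ^^ 2) \<psi>11 t * (deriv ^^ 2) \<psi>22 t)"
      by (rule mult_left_mono) simp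
    thus "\<rho>^2 * (t * (deriv ^^ 2) \<psi>12 t)^2 \<le> (t * (deriv ^^ 2) \<psi>11 t) * (t * (deriv ^^ 2) \<psi>22 t)"
      by (simp add: power_mult_distrib power2_eq_square mult_ac)
  qed (auto intro: rep int)
qed


lemma part_b:
  fixes \<sigma>1 \<sigma>2 \<rho> :: real and \<psi>11 \<psi>12 \<psi>22 :: "real \<Rightarrow> real"
  assumes cont: "\<forall>\<psi>\<in>{\<psi>11, \<psi>12, \<psi>22}. continuous_on {0..} \<psi>"
  and H: "(\<forall>\<psi>\<in>{\<psi>11, \<psi>12, \<psi>22}. correlation_fun_in TYPE(real^3) \<psi>) \<and>
     (\<forall>\<psi>\<in>{\<psi>11, \<psi>12, \<psi>22}. Ck_on 3 \<psi> {0<..}) \<and>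
     (\<forall>\<psi>\<in>{\<psi>11, \<psi>22}. \<forall>r>0. (deriv ^^ 2) \<psi> r - r * (deriv ^^ 3) \<psi> r \<ge> 0) \<and>
     (\<forall>\<psi>\<in>{\<psi>11, \<psi>12, \<psi>22}.
        (\<psi> \<longlongrightarrow> 0) at_top \<and> ((\<lambda>r. r * deriv \<psi> r) \<longlongrightarrow> 0) at_top \<and>
        ((\<lambda>r. r^2 * (deriv ^^ 2) \<psi> r) \<longlongrightarrow> 0) at_top) \<and>
     (\<forall>\<psi>\<in>{\<psi>11, \<psi>12, \<psi>22}.
        set_integrable lborel {0<..} (\<lambda>r. r * (deriv ^^ 2) \<psi> r - r^2 * (deriv ^^ 3) \<psi> r)) \<and>
     ereal (\<rho>^2) \<le> (INF r\<in>{r. r > 0 \<and> (deriv ^^ 2) \<psi>12 r - r * (deriv ^^ 3) \<psi>12 r \<noteq> 0}.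
        ereal (((deriv ^^ 2) \<psi>11 r - r * (deriv ^^ 3) \<psi>11 r) *
               ((deriv ^^ 2) \<psi>22 r - r * (deriv ^^ 3) \<psi>22 r) /
               ((deriv ^^ 2) \<psi>12 r - r * (deriv ^^ 3) \<psi>12 r)^2))"
  shows "matrix_pd_in TYPE(real^3) (cov_matrix \<sigma>1 \<sigma>2 \<rho> \<psi>11 \<psi>12 \<psi>22)"
proof -
  define g where "g \<psi> t = (deriv ^^ 2) \<psi> t - t * (deriv ^^ 3) \<psi> t" for \<psi> :: "real \<Rightarrow> real" and t
  define h where "h \<psi> t = (t * (deriv ^^ 2) \<psi> t - t^2 * (deriv ^^ 3) \<psi> t) / 3" for \<psi> :: "real \<Rightarrow> real" and t
  have hg: "h \<psi> t = t / 3 * g \<psi> t" for \<psi> t by (simp add: h_def g_def power2_eq_square field_simps)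
  have hi: "set_integrable lborel {0<..} (h \<psi>)" if "\<psi> \<in> {\<psi>11, \<psi>12, \<psi>22}" for \<psi>
  proof -
    have "set_integrable lborel {0<..} (\<lambda>r. r * (deriv ^^ 2) \<psi> r - r^2 * (deriv ^^ 3) \<psi> r)"
      using H that by auto
    hence "set_integrable lborel {0<..} (\<lambda>r. (r * (deriv ^^ 2) \<psi> r - r^2 * (deriv ^^ 3) \<psi> r) / 3)"
      by (rule set_integrable_divide)
    thus ?thesis by (simp add: h_def[abs_def])
  qed
  have rep: "\<psi> r = (LINT t|lborel. indicator {0<..} t * (k3 (r/t) * h \<psi> t))"
    if "\<psi> \<in> {\<psi>11, \<psi>12, \<psi>22}" "r \<ge> 0" for \<psi> r
  proof -
    have ck: "Ck_on 3 \<psi> {0<..}" and l0: "(\<psi> \<longlongrightarrow> 0) at_top"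
      and l1: "((\<lambda>r. r * deriv \<psi> r) \<longlongrightarrow> 0) at_top"
      and l2: "((\<lambda>r. r^2 * (deriv ^^ 2) \<psi> r) \<longlongrightarrow> 0) at_top"
      and c: "continuous_on {0..} \<psi>"
      using H cont that(1) by auto
    have hi': "set_integrable lborel {0<..} (\<lambda>r. (r * (deriv ^^ 2) \<psi> r - r^2 * (deriv ^^ 3) \<psi> r) / 3)"
      using hi[OF that(1)] by (simp add: h_def[abs_def])
    have rp: "\<psi> r = (LINT t|lborel. indicator {0<..} t * (k3 (r/t) * h \<psi> t))" if "r > 0" for r
      using rep_b_pos[OF ck l0 l1 l2 hi' that] by (simp add: h_def)
    show ?thesis
    proof (cases "r > 0")
      case True thus ?thesis by (rule rp)
    next
      case False
      hence "r = 0" using that(2) by simp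
      thus ?thesis using rep_zero[OF k3_cont k3_bound hi[OF that(1)] rp c] by simp
    qed
  qed
  have int: "integrable lborel (\<lambda>t. indicator {0<..} t * (k3 (r/t) * h \<psi> t))"
    if "\<psi> \<in> {\<psi>11, \<psi>12, \<psi>22}" "r \<ge> 0" for \<psi> r
    using integrable_kernel[OF k3_cont k3_bound hi[OF that(1)] that(2)] .
  show ?thesis
  proof (rule matrix_pd_generic[where \<kappa> = k3 and ha = "h \<psi>11" and hb = "h \<psi>12" and hc = "h \<psi>22"])
    show "\<And>t p (x::nat \<Rightarrow> real^3) c. t > 0 \<Longrightarrow> (\<Sum>i<p. \<Sum>j<p. c i * k3 (norm (x i - x j) / t) * c j) \<ge> 0"
      by (rule k3_pd)
  next
    fix t :: real assume t: "t > 0"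
    have p11: "g \<psi>11 t \<ge> 0" and p22: "g \<psi>22 t \<ge> 0" using H t by (auto simp: g_def)
    show "h \<psi>11 t \<ge> 0" "h \<psi>22 t \<ge> 0" using p11 p22 t by (auto simp: hg)
    have "\<rho>^2 * (g \<psi>12 t)^2 \<le> g \<psi>11 t * g \<psi>22 t"
    proof (rule cs_from_ratio[OF p11 p22])
      assume "g \<psi>12 t \<noteq> 0"
      thus "\<rho>^2 \<le> g \<psi>11 t * g \<psi>22 t / (g \<psi>12 t)^2"
        using H t unfolding g_def
        by (intro INF_ereal_le[where S = "{r. r > 0 \<and> (deriv ^^ 2) \<psi>12 r - r * (deriv ^^ 3) \<psi>12 r \<noteq> 0}"]) auto
    qed
    hence "(t/3)^2 * (\<rho>^2 * (g \<psi>12 t)^2) \<le> (t/3)^2 * (g \<psi>11 t * g \<psi>22 t)"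
      by (rule mult_left_mono) simp
    thus "\<rho>^2 * (h \<psi>12 t)^2 \<le> h \<psi>11 t * h \<psi>22 t"
      by (simp add: hg power_mult_distrib power2_eq_square mult_ac)
  qed (auto intro: rep int)
qed


theorem theoremB2:
  fixes \<sigma>1 \<sigma>2 \<rho> :: real and \<psi>11 \<psi>12 \<psi>22 :: "real \<Rightarrow> real"
  assumes "\<sigma>1 > 0" and "\<sigma>2 > 0"
    and "\<forall>\<psi>\<in>{\<psi>11, \<psi>12, \<psi>22}. continuous_on {0..} \<psi>"
  shows
   "((\<forall>\<psi>\<in>{\<psi>11, \<psi>12, \<psi>22}. correlation_fun_in TYPE(real) \<psi>) \<and>
     (\<forall>\<psi>\<in>{\<psi>11, \<psi>12, \<psi>22}. Ck_on 2 \<psi> {0<..}) \<and>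
     (\<forall>\<psi>\<in>{\<psi>11, \<psi>22}. \<forall>r>0. (deriv ^^ 2) \<psi> r \<ge> 0) \<and>
     (\<forall>\<psi>\<in>{\<psi>11, \<psi>12, \<psi>22}.
        (\<psi> \<longlongrightarrow> 0) at_top \<and> ((\<lambda>r. r * deriv \<psi> r) \<longlongrightarrow> 0) at_top) \<and>
     (\<forall>\<psi>\<in>{\<psi>11, \<psi>12, \<psi>22}.
        set_integrable lborel {0<..} (\<lambda>r. r * (deriv ^^ 2) \<psi> r)) \<and>
     ereal (\<rho>^2) \<le> (INF r\<in>{r. r > 0 \<and> (deriv ^^ 2) \<psi>12 r \<noteq> 0}.
        ereal ((deriv ^^ 2) \<psi>11 r * (deriv ^^ 2) \<psi>22 r / ((deriv ^^ 2) \<psi>12 r)^2))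
    \<longrightarrow> matrix_pd_in TYPE(real) (cov_matrix \<sigma>1 \<sigma>2 \<rho> \<psi>11 \<psi>12 \<psi>22))
   \<and>
   ((\<forall>\<psi>\<in>{\<psi>11, \<psi>12, \<psi>22}. correlation_fun_in TYPE(real^3) \<psi>) \<and>
     (\<forall>\<psi>\<in>{\<psi>11, \<psi>12, \<psi>22}. Ck_on 3 \<psi> {0<..}) \<and>
     (\<forall>\<psi>\<in>{\<psi>11, \<psi>22}. \<forall>r>0. (deriv ^^ 2) \<psi> r - r * (deriv ^^ 3) \<psi> r \<ge> 0) \<and>
     (\<forall>\<psi>\<in>{\<psi>11, \<psi>12, \<psi>22}.
        (\<psi> \<longlongrightarrow> 0) at_top \<and> ((\<lambda>r. r * deriv \<psi> r) \<longlongrightarrow> 0) at_top \<and>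
        ((\<lambda>r. r^2 * (deriv ^^ 2) \<psi> r) \<longlongrightarrow> 0) at_top) \<and>
     (\<forall>\<psi>\<in>{\<psi>11, \<psi>12, \<psi>22}.
        set_integrable lborel {0<..} (\<lambda>r. r * (deriv ^^ 2) \<psi> r - r^2 * (deriv ^^ 3) \<psi> r)) \<and>
     ereal (\<rho>^2) \<le> (INF r\<in>{r. r > 0 \<and> (deriv ^^ 2) \<psi>12 r - r * (deriv ^^ 3) \<psi>12 r \<noteq> 0}.
        ereal (((deriv ^^ 2) \<psi>11 r - r * (deriv ^^ 3) \<psi>11 r) *
               ((deriv ^^ 2) \<psi>22 r - r * (deriv ^^ 3) \<psi>22 r) /
               ((deriv ^^ 2) \<psi>12 r - r * (deriv ^^ 3) \<psi>12 r)^2))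
    \<longrightarrow> matrix_pd_in TYPE(real^3) (cov_matrix \<sigma>1 \<sigma>2 \<rho> \<psi>11 \<psi>12 \<psi>22))"
proof (intro conjI impI)
  assume H: "(\<forall>\<psi>\<in>{\<psi>11, \<psi>12, \<psi>22}. correlation_fun_in TYPE(real) \<psi>) \<and>
     (\<forall>\<psi>\<in>{\<psi>11, \<psi>12, \<psi>22}. Ck_on 2 \<psi> {0<..}) \<and>
     (\<forall>\<psi>\<in>{\<psi>11, \<psi>22}. \<forall>r>0. (deriv ^^ 2) \<psi> r \<ge> 0) \<and>
     (\<forall>\<psi>\<in>{\<psi>11, \<psi>12, \<psi>22}.
        (\<psi> \<longlongrightarrow> 0) at_top \<and> ((\<lambda>r. r * deriv \<psi> r) \<longlongrightarrow> 0) at_top) \<and>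
     (\<forall>\<psi>\<in>{\<psi>11, \<psi>12, \<psi>22}.
        set_integrable lborel {0<..} (\<lambda>r. r * (deriv ^^ 2) \<psi> r)) \<and>
     ereal (\<rho>^2) \<le> (INF r\<in>{r. r > 0 \<and> (deriv ^^ 2) \<psi>12 r \<noteq> 0}.
        ereal ((deriv ^^ 2) \<psi>11 r * (deriv ^^ 2) \<psi>22 r / ((deriv ^^ 2) \<psi>12 r)^2))"
  show "matrix_pd_in TYPE(real) (cov_matrix \<sigma>1 \<sigma>2 \<rho> \<psi>11 \<psi>12 \<psi>22)"
    by (rule part_a[OF assms(3) H])
next
  assume H: "(\<forall>\<psi>\<in>{\<psi>11, \<psi>12, \<psi>22}. correlation_fun_in TYPE(real^3) \<psi>) \<and>
     (\<forall>\<psi>\<in>{\<psi>11, \<psi>12, \<psi>22}. Ck_on 3 \<psi> {0<..}) \<and>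
     (\<forall>\<psi>\<in>{\<psi>11, \<psi>22}. \<forall>r>0. (deriv ^^ 2) \<psi> r - r * (deriv ^^ 3) \<psi> r \<ge> 0) \<and>
     (\<forall>\<psi>\<in>{\<psi>11, \<psi>12, \<psi>22}.
        (\<psi> \<longlongrightarrow> 0) at_top \<and> ((\<lambda>r. r * deriv \<psi> r) \<longlongrightarrow> 0) at_top \<and>
        ((\<lambda>r. r^2 * (deriv ^^ 2) \<psi> r) \<longlongrightarrow> 0) at_top) \<and>
     (\<forall>\<psi>\<in>{\<psi>11, \<psi>12, \<psi>22}.
        set_integrable lborel {0<..} (\<lambda>r. r * (deriv ^^ 2) \<psi> r - r^2 * (deriv ^^ 3) \<psi> r)) \<and>
     ereal (\<rho>^2) \<le> (INF r\<in>{r. r > 0 \<and> (deriv ^^ 2) \<psi>12 r - r * (deriv ^^ 3) \<psi>12 r \<noteq> 0}.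
        ereal (((deriv ^^ 2) \<psi>11 r - r * (deriv ^^ 3) \<psi>11 r) *
               ((deriv ^^ 2) \<psi>22 r - r * (deriv ^^ 3) \<psi>22 r) /
               ((deriv ^^ 2) \<psi>12 r - r * (deriv ^^ 3) \<psi>12 r)^2))"
  show "matrix_pd_in TYPE(real^3) (cov_matrix \<sigma>1 \<sigma>2 \<rho> \<psi>11 \<psi>12 \<psi>22)"
    by (rule part_b[OF assms(3) H])
qed

end
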